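(* Let $n\ge1$, $V=\{0,1\}^n$, $\mu$ uniform on $V$, $\beta=\log_2(3/2)$, and let $(R,S,U)$ be a partition of $V$ with $\mu(R\cup U)=\alpha$. Then \[ 2^{-n}|\nabla(R,S)|=\int_R h_{R\cup U}\,d\mu\;\ge\;\int_R h_{R\cup U}^\beta\,d\mu\;\ge\;2\alpha(1-\alpha)-n^\beta\mu(U). \]
   Context: $V=\{0,1\}^n$ is the vertex set of the Hamming cube $Q_n$. $d_T(x)$ is the number of neighbors of $x$ in $T$; $h_S(x)=d_{V\setminus S}(x)$ for $x\in S$ and $h_S(x)=0$ otherwise. $\int_X F\,d\mu=\sum_{x\in X}F(x)\mu(x)$. $\nabla(R,S)$ is the set of adjacent pairs $(x,y)$ with $x\in R$, $y\in S$. *)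

theory Defs
  imports Complex_Main
begin

definition cube :: "nat \<Rightarrow> bool list set" where
  "cube n = {xs. length xs = n}"

definition cube_adj :: "bool list \<Rightarrow> bool list \<Rightarrow> bool" where
  "cube_adj x y \<longleftrightarrow> length x = length y \<and> card {i. i < length x \<and> x ! i \<noteq> y ! i} = 1"

definition deg_in :: "bool list set \<Rightarrow> bool list \<Rightarrow> nat" where
  "deg_in T x = card {y \<in> T. cube_adj x y}"

definition hfun :: "nat \<Rightarrow> bool list set \<Rightarrow> bool list \<Rightarrow> nat" where
  "hfun n S x = (if x \<in> S then deg_in (cube n - S) x else 0)"

definition nabla :: "bool list set \<Rightarrow> bool list set \<Rightarrow> (bool list \<times> bool list) set" where
  "nabla R S = {(x, y). x \<in> R \<and> y \<in> S \<and> cube_adj x y}"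

definition mu :: "nat \<Rightarrow> bool list set \<Rightarrow> real" where
  "mu n X = real (card X) / 2 ^ n"

definition cube_int :: "nat \<Rightarrow> bool list set \<Rightarrow> (bool list \<Rightarrow> real) \<Rightarrow> real" where
  "cube_int n X F = (\<Sum>x\<in>X. F x * mu n {x})"

end

theory Submission imports Defs "HOL-Analysis.Convex" begin

definition bb :: real where "bb = log 2 (3/2)"

lemma two_powr_bb: "2 powr bb = 3/2"
  unfolding bb_def by simp

lemma bb_gt_half: "bb > 1/2"
proof -
  have "2 powr (1/2) = sqrt (2::real)" by (simp add: powr_half_sqrt)
  also have "\<dots> < 3/2" by (rule real_less_lsqrt) (auto simp: power2_eq_square)
  finally have "2 powr (1/2) < (2::real) powr bb" using two_powr_bb by linarith
  moreover have "(2::real) powr (1/2) < 2 powr bb \<longleftrightarrow> 1/2 < bb" by (rule powr_less_cancel_iff) simp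
  ultimately show ?thesis by blast
qed

lemma bb_lt_1: "bb < 1"
proof -
  have "(2::real) powr bb < 2 powr 1" using two_powr_bb by simp
  moreover have "(2::real) powr bb < 2 powr 1 \<longleftrightarrow> bb < 1" by (rule powr_less_cancel_iff) simp
  ultimately show ?thesis by blast
qed

lemma concave_bb: "convex_on {0<..} (\<lambda>x::real. - (x powr bb))"
proof -
  have "concave_on {0<..} (\<lambda>x::real. x powr bb)"
  proof (rule f''_le0_imp_concave[where f'="\<lambda>x. bb * x powr (bb - 1)" and f''="\<lambda>x. bb * ((bb - 1) * x powr (bb - 1 - 1))"])
    fix x :: real assume "x \<in> {0<..}"
    hence x: "x > 0" by simp
    show "((\<lambda>x. x powr bb) has_real_derivative bb * x powr (bb - 1)) (at x)"
      using has_real_derivative_powr[OF x] .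
    show "((\<lambda>x. bb * x powr (bb - 1)) has_real_derivative bb * ((bb - 1) * x powr (bb - 1 - 1))) (at x)"
      by (intro DERIV_cmult has_real_derivative_powr x)
    show "bb * ((bb - 1) * x powr (bb - 1 - 1)) \<le> 0"
      using bb_gt_half bb_lt_1 by (intro mult_nonneg_nonpos mult_nonpos_nonneg) auto
  qed auto
  thus ?thesis by (simp add: concave_on_def)
qed


definition g :: "nat \<Rightarrow> real" where "g h = real h powr bb"
definition eps :: "nat \<Rightarrow> real" where "eps h = g (Suc h) - g h"

lemma g_nonneg: "g h \<ge> 0" by (simp add: g_def)
lemma g_0[simp]: "g 0 = 0" by (simp add: g_def)
lemma g_1[simp]: "g 1 = 1" by (simp add: g_def)
lemma g_Suc0[simp]: "g (Suc 0) = 1" by (simp add: g_def)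
lemma g_mono: "h \<le> k \<Longrightarrow> g h \<le> g k"
  unfolding g_def using bb_gt_half by (intro powr_mono2) auto
lemma g_double: "g (2*h) = 3/2 * g h"
  unfolding g_def by (simp add: powr_mult two_powr_bb)
lemma g_2[simp]: "g 2 = 3/2" using g_double[of 1] by simp
lemma eps_nonneg: "eps h \<ge> 0" unfolding eps_def using g_mono[of h "Suc h"] by simp

lemma neg_den: "(a::real) / (x - t) = - (a / (t - x))"
  by (metis minus_diff_eq divide_minus_right)

lemma slope:
  assumes "0 < x" "x < t" "t < y"
  shows "(y powr bb - x powr bb) / (y - x) \<le> (t powr bb - x powr bb) / (t - x)"
    and "(y powr bb - t powr bb) / (y - t) \<le> (y powr bb - x powr bb) / (y - x)"
proof -
  have I: "x \<in> {0<..}" "y \<in> {0<..}" using assms by auto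
  note s = convex_on_slope_le[OF concave_bb I assms(2,3)]
  have e1: "(- (x powr bb) - - (t powr bb)) / (x - t) = - ((t powr bb - x powr bb) / (t - x))"
    by (metis neg_den diff_minus_eq_add uminus_add_conv_diff)
  have e2: "(- (x powr bb) - - (y powr bb)) / (x - y) = - ((y powr bb - x powr bb) / (y - x))"
    by (metis neg_den diff_minus_eq_add uminus_add_conv_diff)
  have e3: "(- (t powr bb) - - (y powr bb)) / (t - y) = - ((y powr bb - t powr bb) / (y - t))"
    by (metis neg_den diff_minus_eq_add uminus_add_conv_diff)
  show "(y powr bb - x powr bb) / (y - x) \<le> (t powr bb - x powr bb) / (t - x)"
    using s(1) e1 e2 by simp
  show "(y powr bb - t powr bb) / (y - t) \<le> (y powr bb - x powr bb) / (y - x)"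
    using s(2) e2 e3 by simp
qed

lemma eps_0[simp]: "eps 0 = 1" by (simp add: eps_def)
lemma eps_1[simp]: "eps 1 = 1/2" by (simp add: eps_def numeral_2_eq_2[symmetric])
lemma eps_Suc0[simp]: "eps (Suc 0) = 1/2" using eps_1 by simp

lemma eps_dec: "eps (Suc h) \<le> eps h"
proof (cases "h = 0")
  case True thus ?thesis by simp
next
  case False
  hence p: "0 < real h" by simp
  note s = slope[OF p, of "real h + 1" "real h + 2"]
  have "eps (Suc h) = ((real h + 2) powr bb - (real h + 1) powr bb) / ((real h + 2) - (real h + 1))"
    by (simp add: eps_def g_def add_ac)
  also have "\<dots> \<le> ((real h + 1) powr bb - real h powr bb) / ((real h + 1) - real h)"
    using s by linarith
  also have "\<dots> = eps h" by (simp add: eps_def g_def add_ac)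
  finally show ?thesis .
qed

lemma eps_antimono: "i \<le> j \<Longrightarrow> eps j \<le> eps i"
proof (induction j rule: dec_induct)
  case (step j) thus ?case using eps_dec[of j] by linarith
qed simp

lemma g_incr: "m \<le> b \<Longrightarrow> g (b + k) - g b \<le> g (m + k) - g m"
proof (induction k)
  case (Suc k)
  have "eps (b + k) \<le> eps (m + k)" using Suc.prems by (intro eps_antimono) simp
  thus ?case using Suc by (simp add: eps_def)
qed simp

lemma g_two_point:
  assumes "hC \<le> h0" "hC \<le> h1" "hD + hC = h0 + h1"
  shows "g hD + g hC \<le> g h0 + g h1"
proof (cases "h0 \<le> h1")
  case True
  have "g (h1 + (h0 - hC)) - g h1 \<le> g (hC + (h0 - hC)) - g hC" using assms by (intro g_incr) simp
  moreover have "h1 + (h0 - hC) = hD" "hC + (h0 - hC) = h0" using assms by auto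
  ultimately show ?thesis by simp
next
  case False
  have "g (h0 + (h1 - hC)) - g h0 \<le> g (hC + (h1 - hC)) - g hC" using assms by (intro g_incr) simp
  moreover have "h0 + (h1 - hC) = hD" "hC + (h1 - hC) = h1" using assms by auto
  ultimately show ?thesis by simp
qed

lemma eps_lower: "h \<ge> 1 \<Longrightarrow> g h / (2 * real h) \<le> eps h"
proof (cases "h = 1")
  case True thus ?thesis by simp
next
  case False
  assume "h \<ge> 1"
  hence h2: "h \<ge> 2" using False by simp
  hence p: "0 < real h" "real h < real h + 1" "real h + 1 < 2 * real h" by auto
  note s = slope(1)[OF p]
  have "g h / (2 * real h) = ((2 * real h) powr bb - real h powr bb) / (2 * real h - real h)"
    using g_double[of h] p(1) by (simp add: g_def field_simps)
  also have "\<dots> \<le> ((real h + 1) powr bb - real h powr bb) / ((real h + 1) - real h)"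
    using s .
  also have "\<dots> = eps h" by (simp add: eps_def g_def add_ac)
  finally show ?thesis .
qed


lemma g_4: "g 4 = 9/4" using g_double[of 2] by simp

lemma line_big: "1 - g h / 2 \<le> eps h"
proof -
  consider "h = 0" | "h = 1" | "h = 2 \<or> h = 3" | "h \<ge> 4" by linarith
  thus ?thesis
  proof cases
    case 1 thus ?thesis by simp
  next
    case 2 thus ?thesis by simp
  next
    case 3
    hence gh: "g h \<ge> 3/2" using g_mono[of 2 h] by auto
    have e: "g h / (2 * real h) \<le> eps h" using 3 by (intro eps_lower) auto
    have "1 \<le> g h * (1 / (2 * real h) + 1/2)"
    proof -
      have "1 / (2 * real h) + 1/2 \<ge> 2/3" using 3 by auto
      hence "3/2 * (2/3) \<le> g h * (1 / (2 * real h) + 1/2)"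
        using gh by (intro mult_mono) auto
      thus ?thesis by simp
    qed
    thus ?thesis using e by (simp add: algebra_simps)
  next
    case 4
    hence "g h \<ge> 9/4" using g_mono[of 4 h] g_4 by auto
    thus ?thesis using eps_nonneg[of h] by linarith
  qed
qed

lemma eq_helper:
  fixes t G bb h :: real assumes "t > 0" "h > 0" "bb > 0"
  shows "G * ((1 - bb) * (2*t) + bb * (1 / (2 * t * h))) = (bb / t) * ((2 * t^2 * (1 - bb) / bb) * G + G / (2 * h))"
  using assms by (simp add: field_simps power2_eq_square)

lemma line_small:
  fixes t :: real
  assumes t: "0 < t" "t < 1/2"
  shows "t / bb - (2 * t^2 * (1 - bb) / bb) * g h \<le> eps h"
proof (cases "h = 0")
  case True
  have "t / bb \<le> 1" using t bb_gt_half by (simp add: divide_simps)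
  thus ?thesis using True by simp
next
  case False
  hence h1: "h \<ge> 1" by simp
  have hp: "real h > 0" using h1 by simp
  define a where "a = 2 * t"
  define b where "b = 1 / (2 * t * real h)"
  have a: "0 < a" "a \<le> 1" using t by (auto simp: a_def)
  have bpos: "0 < b" using t hp by (simp add: b_def)
  have Y: "a powr (1 - bb) * b powr bb \<le> (1 - bb) * a + bb * b"
    using bb_gt_half bb_lt_1 a bpos by (intro Youngs_inequality_0) auto
  have ghp: "g h > 0" using hp by (simp add: g_def)
  have "b * real h = 1 / a" using t hp by (simp add: a_def b_def)
  hence "g h * b powr bb = (1/a) powr bb"
    by (simp add: g_def powr_mult[symmetric] mult.commute)
  also have "\<dots> = 1 / a powr bb" by (simp add: powr_divide)
  finally have gb: "g h * b powr bb = 1 / a powr bb" .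
  have "a powr bb \<le> a powr (1 - bb)" using a bb_gt_half by (intro powr_mono') auto
  moreover have "a powr bb > 0" using a by simp
  ultimately have "1 \<le> a powr (1 - bb) * (1 / a powr bb)" by (simp add: divide_simps)
  also have "\<dots> = g h * (a powr (1 - bb) * b powr bb)" by (metis gb mult.left_commute)
  also have "\<dots> \<le> g h * ((1 - bb) * a + bb * b)" using Y ghp by (intro mult_left_mono) auto
  finally have main: "1 \<le> g h * ((1 - bb) * a + bb * b)" .
  define X where "X = (2 * t^2 * (1 - bb) / bb) * g h + g h / (2 * real h)"
  have eq: "g h * ((1 - bb) * a + bb * b) = (bb / t) * X"
    unfolding X_def a_def b_def using eq_helper[OF t(1) hp, of bb "g h"] bb_gt_half by simp
  from main have "1 \<le> (bb / t) * X" by (simp only: eq)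
  hence "t / bb * 1 \<le> t / bb * ((bb / t) * X)"
    using t bb_gt_half by (intro mult_left_mono) auto
  hence "t / bb \<le> X" using t bb_gt_half by simp
  hence "t / bb \<le> (2 * t^2 * (1 - bb) / bb) * g h + g h / (2 * real h)" by (simp add: X_def)
  thus ?thesis using eps_lower[OF h1] by linarith
qed

lemma choose_line:
  fixes c d :: real
  assumes "0 \<le> d" "d \<le> c" "c \<le> 1"
  shows "\<exists>p q. 0 \<le> q \<and> q \<le> 1 \<and> (\<forall>h. p - q * g h \<le> eps h) \<and>
     p * (c - d) - (c - d)^2 - 2 * q * c * (1 - c) \<ge> 0"
proof -
  define t where "t = c - d"
  consider "t = 0" | "0 < t \<and> t < 1/2" | "t \<ge> 1/2" using assms t_def by linarith
  thus ?thesis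
  proof cases
    case 1
    show ?thesis
      by (rule exI[of _ 0], rule exI[of _ 0]) (use 1 t_def eps_nonneg in auto)
  next
    case 2
    define q where "q = 2 * t^2 * (1 - bb) / bb"
    have q0: "0 \<le> q" using bb_gt_half bb_lt_1 by (simp add: q_def)
    have "t * t \<le> (1/2) * (1/2)" using 2 by (intro mult_mono) auto
    hence "t^2 \<le> 1/4" by (simp add: power2_eq_square)
    moreover have "(1 - bb) / bb \<le> 1" using bb_gt_half by (simp add: divide_simps)
    ultimately have "2 * t^2 * ((1 - bb) / bb) \<le> 2 * (1/4) * 1"
      using bb_gt_half bb_lt_1 by (intro mult_mono) auto
    hence q1: "q \<le> 1" by (simp add: q_def)
    have "(c-1/2)^2 = 1/4 - c*(1-c)" by (simp add: power2_eq_square algebra_simps)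
    hence cc: "c * (1 - c) \<le> 1/4" using zero_le_power2[of "c - 1/2"] by linarith
    have "(t / bb) * t - t^2 = q / 2" using bb_gt_half by (simp add: q_def field_simps power2_eq_square)
    moreover have "2 * q * (c * (1 - c)) \<le> 2 * q * (1/4)" using cc q0
      by (intro mult_left_mono) auto
    hence "2 * q * c * (1 - c) \<le> q / 2" by (simp add: mult.assoc)
    ultimately show ?thesis using q0 q1 line_small[of t] 2
      by (intro exI[of _ "t / bb"] exI[of _ q]) (auto simp: q_def t_def)
  next
    case 3
    have "c * (1 - c) \<le> t * (1 - t)"
    proof -
      have "t * (1 - t) - c * (1 - c) = (c - t) * (c + t - 1)" by (simp add: algebra_simps)
      moreover have "(c - t) * (c + t - 1) \<ge> 0" using 3 assms t_def by (intro mult_nonneg_nonneg) auto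
      ultimately show ?thesis by linarith
    qed
    thus ?thesis using line_big
      by (intro exI[of _ 1] exI[of _ "1/2"]) (auto simp: t_def power2_eq_square algebra_simps)
  qed
qed

lemma final_ineq:
  fixes c d SC SD W p q :: real
  assumes "0 \<le> d" "d \<le> c" "c \<le> 1" "SC \<ge> 2*c*(1-c)" "SD \<ge> 2*d*(1-d)" "0 \<le> q" "q \<le> 1"
    "W \<ge> p*(c-d) - q*SC" "p*(c-d) - (c-d)^2 - 2*q*c*(1-c) \<ge> 0"
  shows "SC + SD + W \<ge> (c+d)*(2-c-d)"
proof -
  have "(1-q)*SC \<ge> (1-q)*(2*c*(1-c))" using assms by (intro mult_left_mono) auto
  moreover have "(1-q)*SC = SC - q*SC" by (simp add: algebra_simps)
  ultimately have "SC + SD + W \<ge> (1-q)*(2*c*(1-c)) + 2*d*(1-d) + p*(c-d)" using assms by linarith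
  moreover have "(1-q)*(2*c*(1-c)) + 2*d*(1-d) + p*(c-d) - (c+d)*(2-c-d)
     = p*(c-d) - (c-d)^2 - 2*q*c*(1-c)" by (simp add: algebra_simps power2_eq_square)
  ultimately show ?thesis using assms by linarith
qed


lemma finite_cube: "finite (cube n)"
proof -
  have "cube n = {xs. set xs \<subseteq> (UNIV::bool set) \<and> length xs = n}" by (auto simp: cube_def)
  thus ?thesis using finite_lists_length_eq[of "UNIV::bool set" n] by simp
qed

lemma card_cube: "card (cube n) = 2 ^ n"
proof -
  have "cube n = {xs. set xs \<subseteq> (UNIV::bool set) \<and> length xs = n}" by (auto simp: cube_def)
  thus ?thesis using card_lists_length_eq[of "UNIV::bool set" n] by simp
qed

lemma Cons_cube[simp]: "b # xs \<in> cube (Suc n) \<longleftrightarrow> xs \<in> cube n"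
  by (simp add: cube_def)

lemma cube_Suc_elem: "y \<in> cube (Suc n) \<Longrightarrow> \<exists>b ys. y = b # ys \<and> ys \<in> cube n"
  by (cases y) (auto simp: cube_def)

definition dif :: "bool list \<Rightarrow> bool list \<Rightarrow> nat set" where
  "dif x y = {i. i < length x \<and> x ! i \<noteq> y ! i}"

lemma dif_Cons: "dif (a # xs) (b # ys) = (if a \<noteq> b then {0} else {}) \<union> Suc ` dif xs ys"
proof -
  have "i \<in> dif (a # xs) (b # ys) \<longleftrightarrow> i \<in> (if a \<noteq> b then {0} else {}) \<union> Suc ` dif xs ys" for i
    by (cases i) (auto simp: dif_def)
  thus ?thesis by blast
qed

lemma finite_dif: "finite (dif x y)" by (simp add: dif_def)

lemma dif_empty: "length xs = length ys \<Longrightarrow> dif xs ys = {} \<longleftrightarrow> xs = ys"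
  by (auto simp: dif_def intro: nth_equalityI)

lemma card_dif_Cons: "card (dif (a # xs) (b # ys)) = (if a \<noteq> b then 1 else 0) + card (dif xs ys)"
proof -
  have "card (Suc ` dif xs ys) = card (dif xs ys)" by (simp add: card_image)
  moreover have "0 \<notin> Suc ` dif xs ys" by auto
  ultimately show ?thesis using finite_dif[of xs ys] by (simp add: dif_Cons)
qed

lemma adj_Cons: "cube_adj (a # xs) (b # ys) \<longleftrightarrow> (a = b \<and> cube_adj xs ys) \<or> (a \<noteq> b \<and> xs = ys)"
proof -
  have cd: "cube_adj u v \<longleftrightarrow> length u = length v \<and> card (dif u v) = 1" for u v
    by (simp add: cube_adj_def dif_def)
  show ?thesis
  proof (cases "length xs = length ys")
    case True
    have "card (dif xs ys) = 0 \<longleftrightarrow> xs = ys"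
      using dif_empty[OF True] finite_dif[of xs ys] by auto
    thus ?thesis using True by (auto simp: cd card_dif_Cons)
  next
    case False thus ?thesis by (auto simp: cd)
  qed
qed

definition sl :: "bool \<Rightarrow> bool list set \<Rightarrow> bool list set" where
  "sl a A = {xs. a # xs \<in> A}"

lemma sl_sub: "A \<subseteq> cube (Suc n) \<Longrightarrow> sl a A \<subseteq> cube n"
  by (auto simp: sl_def)

lemma deg_Cons:
  assumes T: "T \<subseteq> cube (Suc n)"
  shows "deg_in T (a # xs) = (if (\<not> a) # xs \<in> T then 1 else 0) + deg_in (sl a T) xs"
proof -
  have fin: "finite T" using T finite_cube finite_subset by blast
  have eq: "{y \<in> T. cube_adj (a # xs) y} = ({(\<not> a) # xs} \<inter> T) \<union> Cons a ` {ys \<in> sl a T. cube_adj xs ys}"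
  proof (rule set_eqI, rule iffI)
    fix y assume y: "y \<in> {y \<in> T. cube_adj (a # xs) y}"
    then obtain b ys where "y = b # ys" using T cube_Suc_elem by blast
    thus "y \<in> ({(\<not> a) # xs} \<inter> T) \<union> Cons a ` {ys \<in> sl a T. cube_adj xs ys}"
      using y by (cases "a = b") (auto simp: adj_Cons sl_def)
  next
    fix y assume "y \<in> ({(\<not> a) # xs} \<inter> T) \<union> Cons a ` {ys \<in> sl a T. cube_adj xs ys}"
    thus "y \<in> {y \<in> T. cube_adj (a # xs) y}" by (auto simp: adj_Cons sl_def)
  qed
  have f2: "finite {ys \<in> sl a T. cube_adj xs ys}"
    using sl_sub[OF T] finite_cube finite_subset by (metis (no_types, lifting) mem_Collect_eq subsetI subset_iff)
  have "card ({(\<not> a) # xs} \<inter> T \<union> Cons a ` {ys \<in> sl a T. cube_adj xs ys})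
        = card ({(\<not> a) # xs} \<inter> T) + card (Cons a ` {ys \<in> sl a T. cube_adj xs ys})"
    by (rule card_Un_disjoint) (use f2 in auto)
  also have "card (Cons a ` {ys \<in> sl a T. cube_adj xs ys}) = card {ys \<in> sl a T. cube_adj xs ys}"
    by (simp add: card_image)
  finally show ?thesis unfolding deg_in_def eq by auto
qed

lemma hfun_Cons:
  assumes A: "A \<subseteq> cube (Suc n)" and x: "xs \<in> sl a A"
  shows "hfun (Suc n) A (a # xs) = (if xs \<in> sl (\<not> a) A then 0 else 1) + deg_in (cube n - sl a A) xs"
proof -
  have xa: "a # xs \<in> A" using x by (simp add: sl_def)
  hence xc: "xs \<in> cube n" using A by auto
  have "sl a (cube (Suc n) - A) = cube n - sl a A" by (auto simp: sl_def)
  moreover have "((\<not> a) # xs \<in> cube (Suc n) - A) \<longleftrightarrow> xs \<notin> sl (\<not> a) A" using xc by (simp add: sl_def)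
  ultimately show ?thesis using xa deg_Cons[of "cube (Suc n) - A" n a xs] by (simp add: hfun_def)
qed

lemma sum_split:
  assumes A: "A \<subseteq> cube (Suc n)"
  shows "(\<Sum>z\<in>A. F z) = (\<Sum>xs\<in>sl True A. F (True # xs)) + (\<Sum>xs\<in>sl False A. F (False # xs))"
proof -
  have fin: "finite A" using A finite_cube finite_subset by blast
  have Aeq: "A = Cons True ` sl True A \<union> Cons False ` sl False A"
  proof (rule set_eqI, rule iffI)
    fix z assume "z \<in> A"
    moreover then obtain b ys where "z = b # ys" using A cube_Suc_elem by blast
    ultimately show "z \<in> Cons True ` sl True A \<union> Cons False ` sl False A"
      by (cases b) (auto simp: sl_def)
  qed (auto simp: sl_def)
  have f1: "finite (sl True A)" "finite (sl False A)"
    using sl_sub[OF A] finite_cube finite_subset by blast+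
  have "(\<Sum>z\<in>A. F z) = (\<Sum>z\<in>Cons True ` sl True A. F z) + (\<Sum>z\<in>Cons False ` sl False A. F z)"
    by (subst Aeq, rule sum.union_disjoint) (use f1 in auto)
  also have "\<dots> = (\<Sum>xs\<in>sl True A. F (True # xs)) + (\<Sum>xs\<in>sl False A. F (False # xs))"
    by (simp add: sum.reindex)
  finally show ?thesis .
qed

lemma card_split:
  assumes A: "A \<subseteq> cube (Suc n)"
  shows "card A = card (sl True A) + card (sl False A)"
  using sum_split[OF A, of "\<lambda>_. 1::nat"] by simp


lemma deg_Un_Int:
  assumes "finite X" "finite Y"
  shows "deg_in (X \<union> Y) x + deg_in (X \<inter> Y) x = deg_in X x + deg_in Y x"
proof -
  have "{y \<in> X \<union> Y. cube_adj x y} = {y \<in> X. cube_adj x y} \<union> {y \<in> Y. cube_adj x y}"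
       "{y \<in> X \<inter> Y. cube_adj x y} = {y \<in> X. cube_adj x y} \<inter> {y \<in> Y. cube_adj x y}" by auto
  thus ?thesis unfolding deg_in_def using assms card_Un_Int[of "{y \<in> X. cube_adj x y}" "{y \<in> Y. cube_adj x y}"]
    by simp
qed

lemma deg_mono: "finite Y \<Longrightarrow> X \<subseteq> Y \<Longrightarrow> deg_in X x \<le> deg_in Y x"
  unfolding deg_in_def by (rule card_mono) auto

lemma g_Suc: "g (Suc k) = g k + eps k" by (simp add: eps_def)

lemma sum_nonneg_g: "0 \<le> (\<Sum>x\<in>A. g (f x))" by (intro sum_nonneg g_nonneg)

theorem KP:
  "A \<subseteq> cube n \<Longrightarrow> 2 * real (card A) * (2^n - real (card A)) / 2^n \<le> (\<Sum>x\<in>A. g (hfun n A x))"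
proof (induction n arbitrary: A)
  case 0
  have "card A \<le> card (cube 0)" using 0 finite_cube by (intro card_mono) auto
  hence "card A \<le> 1" by (simp add: card_cube)
  hence "card A = 0 \<or> card A = 1" by linarith
  hence "2 * real (card A) * (2^0 - real (card A)) / 2^0 = 0" by auto
  thus ?case using sum_nonneg_g[of "hfun 0 A" A] by (cases "card A = 0") auto
next
  case (Suc n A)
  note AS = Suc.prems
  define A0 where "A0 = sl False A"
  define A1 where "A1 = sl True A"
  define C where "C = A0 \<union> A1"
  define D where "D = A0 \<inter> A1"
  define hh where "hh X x = deg_in (cube n - X) x" for X x
  define K :: real where "K = 2 ^ n"
  have Kp: "K > 0" by (simp add: K_def)
  have sub: "A0 \<subseteq> cube n" "A1 \<subseteq> cube n" using sl_sub[OF AS] by (auto simp: A0_def A1_def)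
  hence subCD: "C \<subseteq> cube n" "D \<subseteq> cube n" by (auto simp: C_def D_def)
  have fin: "finite A0" "finite A1" "finite C" "finite D"
    using sub subCD finite_cube finite_subset by blast+
  have finc: "finite (cube n - X)" for X using finite_cube by simp
  have SA: "(\<Sum>z\<in>A. g (hfun (Suc n) A z)) =
      (\<Sum>x\<in>A1. g ((if x \<in> A0 then 0 else 1) + hh A1 x)) + (\<Sum>x\<in>A0. g ((if x \<in> A1 then 0 else 1) + hh A0 x))"
  proof -
    have "(\<Sum>z\<in>A. g (hfun (Suc n) A z)) = (\<Sum>xs\<in>A1. g (hfun (Suc n) A (True # xs))) + (\<Sum>xs\<in>A0. g (hfun (Suc n) A (False # xs)))"
      using sum_split[OF AS] by (simp add: A0_def A1_def)
    also have "(\<Sum>xs\<in>A1. g (hfun (Suc n) A (True # xs))) = (\<Sum>x\<in>A1. g ((if x \<in> A0 then 0 else 1) + hh A1 x))"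
      by (rule sum.cong) (auto simp: hfun_Cons[OF AS] A0_def A1_def hh_def)
    also have "(\<Sum>xs\<in>A0. g (hfun (Suc n) A (False # xs))) = (\<Sum>x\<in>A0. g ((if x \<in> A1 then 0 else 1) + hh A0 x))"
      by (rule sum.cong) (auto simp: hfun_Cons[OF AS] A0_def A1_def hh_def)
    finally show ?thesis .
  qed
  define L where "L x = (if x \<in> A1 then g ((if x \<in> A0 then 0 else 1) + hh A1 x) else 0)
      + (if x \<in> A0 then g ((if x \<in> A1 then 0 else 1) + hh A0 x) else 0)" for x
  have SL: "(\<Sum>z\<in>A. g (hfun (Suc n) A z)) = (\<Sum>x\<in>C. L x)"
  proof -
    have "(\<Sum>x\<in>C. L x) = (\<Sum>x\<in>C. if x \<in> A1 then g ((if x \<in> A0 then 0 else 1) + hh A1 x) else 0)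
        + (\<Sum>x\<in>C. if x \<in> A0 then g ((if x \<in> A1 then 0 else 1) + hh A0 x) else 0)"
      unfolding L_def by (rule sum.distrib)
    also have "(\<Sum>x\<in>C. if x \<in> A1 then g ((if x \<in> A0 then 0 else 1) + hh A1 x) else 0)
        = (\<Sum>x\<in>C \<inter> A1. g ((if x \<in> A0 then 0 else 1) + hh A1 x))"
      by (rule sum.inter_restrict[symmetric]) (rule fin)
    also have "C \<inter> A1 = A1" by (auto simp: C_def)
    also have "(\<Sum>x\<in>C. if x \<in> A0 then g ((if x \<in> A1 then 0 else 1) + hh A0 x) else 0)
        = (\<Sum>x\<in>C \<inter> A0. g ((if x \<in> A1 then 0 else 1) + hh A0 x))"
      by (rule sum.inter_restrict[symmetric]) (rule fin)
    also have "C \<inter> A0 = A0" by (auto simp: C_def)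
    finally show ?thesis using SA by simp
  qed
  define Rf where "Rf x = g (hh C x) + (if x \<in> D then g (hh D x) else eps (hh C x))" for x
  have pw: "Rf x \<le> L x" if xC: "x \<in> C" for x
  proof -
    have cd: "cube n - C = (cube n - A0) \<inter> (cube n - A1)" "cube n - D = (cube n - A0) \<union> (cube n - A1)"
      by (auto simp: C_def D_def)
    have e1: "hh D x + hh C x = hh A0 x + hh A1 x"
      unfolding hh_def cd by (rule deg_Un_Int) (rule finc)+
    have m0: "hh C x \<le> hh A0 x" "hh C x \<le> hh A1 x"
      unfolding hh_def by (rule deg_mono, rule finc, auto simp: C_def)+
    consider "x \<in> D" | "x \<in> A0" "x \<notin> A1" | "x \<in> A1" "x \<notin> A0" using xC by (auto simp: C_def D_def)
    thus ?thesis
    proof cases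
      case 1
      hence "x \<in> A0" "x \<in> A1" by (auto simp: D_def)
      thus ?thesis using 1 g_two_point[OF m0 e1] by (simp add: Rf_def L_def add.commute)
    next
      case 2
      hence "x \<notin> D" by (auto simp: D_def)
      have "g (Suc (hh C x)) \<le> g (Suc (hh A0 x))" using m0 by (intro g_mono) auto
      thus ?thesis using 2 \<open>x \<notin> D\<close> by (simp add: Rf_def L_def g_Suc)
    next
      case 3
      hence "x \<notin> D" by (auto simp: D_def)
      have "g (Suc (hh C x)) \<le> g (Suc (hh A1 x))" using m0 by (intro g_mono) auto
      thus ?thesis using 3 \<open>x \<notin> D\<close> by (simp add: Rf_def L_def g_Suc)
    qed
  qed
  define SC where "SC = (\<Sum>x\<in>C. g (hh C x))"
  define SD where "SD = (\<Sum>x\<in>D. g (hh D x))"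
  define W where "W = (\<Sum>x\<in>C - D. eps (hh C x))"
  have DC: "D \<subseteq> C" by (auto simp: C_def D_def)
  have SR: "(\<Sum>x\<in>C. Rf x) = SC + SD + W"
  proof -
    have "(\<Sum>x\<in>C. Rf x) = SC + (\<Sum>x\<in>C. if x \<in> D then g (hh D x) else eps (hh C x))"
      unfolding Rf_def SC_def by (rule sum.distrib)
    also have "(\<Sum>x\<in>C. if x \<in> D then g (hh D x) else eps (hh C x))
        = (\<Sum>x\<in>C \<inter> {x. x \<in> D}. g (hh D x)) + (\<Sum>x\<in>C \<inter> - {x. x \<in> D}. eps (hh C x))"
      by (rule sum.If_cases) (rule fin)
    also have "C \<inter> {x. x \<in> D} = D" using DC by auto
    also have "C \<inter> - {x. x \<in> D} = C - D" by auto
    finally show ?thesis by (simp add: SD_def W_def add.assoc)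
  qed
  have main1: "SC + SD + W \<le> (\<Sum>z\<in>A. g (hfun (Suc n) A z))"
    unfolding SL SR[symmetric] by (rule sum_mono) (rule pw)
  have IHC: "2 * real (card C) * (K - real (card C)) / K \<le> SC"
  proof -
    have "(\<Sum>x\<in>C. g (hfun n C x)) = SC" unfolding SC_def
      by (rule sum.cong) (auto simp: hfun_def hh_def)
    thus ?thesis using Suc.IH[OF subCD(1)] by (simp add: K_def)
  qed
  have IHD: "2 * real (card D) * (K - real (card D)) / K \<le> SD"
  proof -
    have "(\<Sum>x\<in>D. g (hfun n D x)) = SD" unfolding SD_def
      by (rule sum.cong) (auto simp: hfun_def hh_def)
    thus ?thesis using Suc.IH[OF subCD(2)] by (simp add: K_def)
  qed
  define c where "c = real (card C) / K"
  define d where "d = real (card D) / K"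
  have cardDC: "card D \<le> card C" using DC fin by (intro card_mono) auto
  have cardC: "card C \<le> 2 ^ n" using subCD(1) finite_cube card_mono card_cube by metis
  have c1: "c \<le> 1" using cardC Kp by (simp add: c_def K_def)
  have dc: "d \<le> c" using cardDC Kp by (simp add: c_def d_def divide_right_mono)
  have d0: "0 \<le> d" using Kp by (simp add: d_def)
  obtain p q where pq: "0 \<le> q" "q \<le> 1" "\<And>h. p - q * g h \<le> eps h"
    "p * (c - d) - (c - d)^2 - 2 * q * c * (1 - c) \<ge> 0"
    using choose_line[OF d0 dc c1] by blast
  have W1: "W \<ge> p * (real (card C) - real (card D)) - q * SC"
  proof -
    have "(\<Sum>x\<in>C - D. p - q * g (hh C x)) \<le> W" unfolding W_def by (rule sum_mono) (rule pq(3))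
    moreover have "(\<Sum>x\<in>C - D. p - q * g (hh C x)) = p * real (card (C - D)) - q * (\<Sum>x\<in>C - D. g (hh C x))"
      by (simp add: sum_subtractf sum_distrib_left)
    moreover have "p * real (card (C - D)) = p * (real (card C) - real (card D))"
      using card_Diff_subset[OF fin(4) DC] cardDC by simp
    moreover have "(\<Sum>x\<in>C - D. g (hh C x)) \<le> SC" unfolding SC_def
      by (rule sum_mono2) (use fin g_nonneg in auto)
    hence "q * (\<Sum>x\<in>C - D. g (hh C x)) \<le> q * SC" using pq(1) by (rule mult_left_mono)
    ultimately show ?thesis by linarith
  qed
  have F: "SC / K + SD / K + W / K \<ge> (c + d) * (2 - c - d)"
  proof (rule final_ineq[OF d0 dc c1 _ _ pq(1,2) _ pq(4)])
    have "2 * c * (1 - c) = (2 * real (card C) * (K - real (card C)) / K) / K"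
      using Kp by (simp add: c_def field_simps)
    also have "\<dots> \<le> SC / K" using IHC Kp by (intro divide_right_mono) auto
    finally show "2 * c * (1 - c) \<le> SC / K" .
    have "2 * d * (1 - d) = (2 * real (card D) * (K - real (card D)) / K) / K"
      using Kp by (simp add: d_def field_simps)
    also have "\<dots> \<le> SD / K" using IHD Kp by (intro divide_right_mono) auto
    finally show "2 * d * (1 - d) \<le> SD / K" .
    have "W / K \<ge> (p * (real (card C) - real (card D)) - q * SC) / K"
      using W1 Kp by (simp add: divide_right_mono)
    moreover have "p * (c - d) - q * (SC / K) = (p * (real (card C) - real (card D)) - q * SC) / K"
      using Kp by (simp add: c_def d_def field_simps)
    ultimately show "p * (c - d) - q * (SC / K) \<le> W / K" by simp
  qed
  have cardA: "card A = card C + card D"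
    using card_split[OF AS] card_Un_Int[OF fin(1,2)] by (simp add: A0_def A1_def C_def D_def)
  have "2 * real (card A) * (2 ^ Suc n - real (card A)) / 2 ^ Suc n = K * ((c + d) * (2 - c - d))"
    using Kp unfolding cardA c_def d_def K_def by (simp add: field_simps)
  also have "\<dots> \<le> K * (SC / K + SD / K + W / K)" using F Kp by (intro mult_left_mono) auto
  also have "\<dots> = SC + SD + W" using Kp by (simp add: field_simps)
  finally show ?case using main1 by linarith
qed


lemma deg_le: "T \<subseteq> cube n \<Longrightarrow> x \<in> cube n \<Longrightarrow> deg_in T x \<le> n"
proof (induction n arbitrary: T x)
  case 0
  hence x: "x = []" by (simp add: cube_def)
  have e: "{y \<in> T. cube_adj [] y} = {}" by (auto simp: cube_adj_def)
  show ?case unfolding deg_in_def x e by simp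
next
  case (Suc n T x)
  obtain a xs where x: "x = a # xs" "xs \<in> cube n" using cube_Suc_elem[OF Suc.prems(2)] by blast
  have "deg_in (sl a T) xs \<le> n" using Suc.IH[OF sl_sub[OF Suc.prems(1)] x(2)] .
  thus ?case using deg_Cons[OF Suc.prems(1), of a xs] x by simp
qed

lemma cube_int_eq: "cube_int n X F = (\<Sum>x\<in>X. F x) / 2 ^ n"
  by (simp add: cube_int_def mu_def sum_divide_distrib)

theorem corollary3p2:
  fixes n :: nat and R S U :: "bool list set" and \<alpha> \<beta> :: real
  assumes "n \<ge> 1"
    and "\<beta> = log 2 (3/2)"
    and "R \<union> S \<union> U = cube n"
    and "R \<inter> S = {}" and "R \<inter> U = {}" and "S \<inter> U = {}"
    and "mu n (R \<union> U) = \<alpha>"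
  shows "real (card (nabla R S)) / 2 ^ n = cube_int n R (\<lambda>x. real (hfun n (R \<union> U) x))
    \<and> cube_int n R (\<lambda>x. real (hfun n (R \<union> U) x)) \<ge> cube_int n R (\<lambda>x. real (hfun n (R \<union> U) x) powr \<beta>)
    \<and> cube_int n R (\<lambda>x. real (hfun n (R \<union> U) x) powr \<beta>) \<ge> 2 * \<alpha> * (1 - \<alpha>) - real n powr \<beta> * mu n U"
proof -
  note part = assms(3-6)
  have beta: "\<beta> = bb" using assms(2) by (simp add: bb_def)
  define A where "A = R \<union> U"
  define K :: real where "K = 2 ^ n"
  have Kp: "K > 0" by (simp add: K_def)
  have Asub: "A \<subseteq> cube n" using part by (auto simp: A_def)
  have fins: "finite R" "finite S" "finite U" "finite A"
    using part finite_cube finite_subset Asub by (metis Un_upper1 Un_upper2)+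
  have SA: "cube n - A = S" using part by (auto simp: A_def)
  have hR: "hfun n A x = deg_in S x" if "x \<in> R" for x
    using that SA by (simp add: hfun_def A_def)
  have P1: "real (card (nabla R S)) = (\<Sum>x\<in>R. real (hfun n A x))"
  proof -
    have "nabla R S = Sigma R (\<lambda>x. {y \<in> S. cube_adj x y})" by (auto simp: nabla_def)
    hence "card (nabla R S) = (\<Sum>x\<in>R. card {y \<in> S. cube_adj x y})"
      using fins by (simp add: card_SigmaI)
    also have "\<dots> = (\<Sum>x\<in>R. hfun n A x)" by (rule sum.cong) (auto simp: hR deg_in_def)
    finally show ?thesis by simp
  qed
  have pw2: "real h powr bb \<le> real h" for h :: nat
  proof (cases "h = 0")
    case True thus ?thesis by simp
  next
    case False
    hence "real h powr bb \<le> real h powr 1" using bb_lt_1 by (intro powr_mono) auto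
    thus ?thesis using False by simp
  qed
  have KPA: "2 * real (card A) * (K - real (card A)) / K \<le> (\<Sum>x\<in>A. g (hfun n A x))"
    using KP[OF Asub] by (simp add: K_def)
  have RU: "R \<inter> U = {}" using part by blast
  have splitA: "(\<Sum>x\<in>A. g (hfun n A x)) = (\<Sum>x\<in>R. g (hfun n A x)) + (\<Sum>x\<in>U. g (hfun n A x))"
    unfolding A_def by (rule sum.union_disjoint) (use fins RU in auto)
  have Ubound: "(\<Sum>x\<in>U. g (hfun n A x)) \<le> real (card U) * real n powr bb"
  proof -
    have "(\<Sum>x\<in>U. g (hfun n A x)) \<le> (\<Sum>x\<in>U. real n powr bb)"
    proof (rule sum_mono)
      fix x assume xU: "x \<in> U"
      hence xc: "x \<in> cube n" using part by auto
      have "hfun n A x \<le> n"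
        using deg_le[of "cube n - A" n x] xc by (simp add: hfun_def)
      thus "g (hfun n A x) \<le> real n powr bb" unfolding g_def using bb_gt_half
        by (intro powr_mono2) auto
    qed
    thus ?thesis by simp
  qed
  have alpha: "\<alpha> = real (card A) / K" using assms(7) by (simp add: mu_def A_def K_def)
  have muU: "mu n U = real (card U) / K" by (simp add: mu_def K_def)
  have "2 * \<alpha> * (1 - \<alpha>) - real n powr \<beta> * mu n U
      = (2 * real (card A) * (K - real (card A)) / K - real (card U) * real n powr bb) / K"
    using Kp by (simp add: alpha muU beta field_simps)
  also have "\<dots> \<le> (\<Sum>x\<in>R. g (hfun n A x)) / K"
    using KPA splitA Ubound Kp by (intro divide_right_mono) auto
  also have "\<dots> = cube_int n R (\<lambda>x. real (hfun n (R \<union> U) x) powr \<beta>)"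
    by (simp add: cube_int_eq g_def beta A_def K_def)
  finally have P3: "cube_int n R (\<lambda>x. real (hfun n (R \<union> U) x) powr \<beta>) \<ge> 2 * \<alpha> * (1 - \<alpha>) - real n powr \<beta> * mu n U" .
  have P2: "cube_int n R (\<lambda>x. real (hfun n (R \<union> U) x)) \<ge> cube_int n R (\<lambda>x. real (hfun n (R \<union> U) x) powr \<beta>)"
    unfolding cube_int_eq beta using pw2 by (intro divide_right_mono sum_mono) auto
  have P1': "real (card (nabla R S)) / 2 ^ n = cube_int n R (\<lambda>x. real (hfun n (R \<union> U) x))"
    unfolding cube_int_eq P1 by (simp add: A_def)
  show ?thesis using P1' P2 P3 by blast
qed


end
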